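(* Let $G$ be a nontrivial finite group, $1\ne g\in G$, and $S=\mathscr M(G,2,2,C)$ with $C=\begin{bmatrix}1&1\\1&g\end{bmatrix}$. Then both the minimal degree of a faithful action of $S$ by partial transformations and by total transformations equal $\min\{2\deg(\rho)-|\mathrm{Fix}(\rho(g))|\}$, as $\rho$ runs over all faithful permutation representations of $G$ (equivalently, all faithful permutation representations with no two isomorphic orbits).
   Context: The Rees matrix semigroup $\mathscr M(G,2,2,C)$ is $\{1,2\}\times G\times\{1,2\}$ with $(i,h,j)(k,h',l)=(i,hC_{jk}h',l)$. The minimal degree of a faithful action by partial (resp. total) transformations is the least $m$ such that $S$ embeds in the monoid of partial (resp. total) maps of an $m$-set acting on the right. $\deg(\rho)$ is the number of points permuted and $\mathrm{Fix}(\rho(g))$ the set of fixed points of $\rho(g)$. *)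

theory Defs
  imports "HOL-Algebra.Bij"
begin

definition rees_carrier :: "('g, 'b) monoid_scheme \<Rightarrow> (nat \<times> 'g \<times> nat) set" where
  "rees_carrier G = {1,2} \<times> carrier G \<times> {1,2}"

definition rees_mult ::
  "('g, 'b) monoid_scheme \<Rightarrow> (nat \<Rightarrow> nat \<Rightarrow> 'g) \<Rightarrow> nat \<times> 'g \<times> nat \<Rightarrow> nat \<times> 'g \<times> nat \<Rightarrow> nat \<times> 'g \<times> nat" where
  "rees_mult G C a b = (case a of (i, h, j) \<Rightarrow> case b of (k, h', l) \<Rightarrow>
      (i, h \<otimes>\<^bsub>G\<^esub> C j k \<otimes>\<^bsub>G\<^esub> h', l))"

definition sandwich_C :: "('g, 'b) monoid_scheme \<Rightarrow> 'g \<Rightarrow> nat \<Rightarrow> nat \<Rightarrow> 'g" where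
  "sandwich_C G g j k = (if j = 2 \<and> k = 2 then g else \<one>\<^bsub>G\<^esub>)"

text \<open>The m-set is {..<m}. A partial transformation is a map nat => nat option that
  is None outside {..<m} and has values in {..<m}. Maps act on the right, so the
  product s t acts as "first s, then t".\<close>

definition partial_faithful_action ::
  "'s set \<Rightarrow> ('s \<Rightarrow> 's \<Rightarrow> 's) \<Rightarrow> nat \<Rightarrow> bool" where
  "partial_faithful_action S mul m \<longleftrightarrow>
    (\<exists>\<phi> :: 's \<Rightarrow> nat \<Rightarrow> nat option.
       inj_on \<phi> S \<and>
       (\<forall>s\<in>S. \<forall>x. (x < m \<longrightarrow> (\<forall>y. \<phi> s x = Some y \<longrightarrow> y < m)) \<and>
                   (m \<le> x \<longrightarrow> \<phi> s x = None)) \<and>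
       (\<forall>s\<in>S. \<forall>t\<in>S. \<phi> (mul s t) = (\<lambda>x. Option.bind (\<phi> s x) (\<phi> t))))"

definition total_faithful_action ::
  "'s set \<Rightarrow> ('s \<Rightarrow> 's \<Rightarrow> 's) \<Rightarrow> nat \<Rightarrow> bool" where
  "total_faithful_action S mul m \<longleftrightarrow>
    (\<exists>\<phi> :: 's \<Rightarrow> nat \<Rightarrow> nat.
       inj_on \<phi> S \<and>
       (\<forall>s\<in>S. \<forall>x. (x < m \<longrightarrow> \<phi> s x < m) \<and> (m \<le> x \<longrightarrow> \<phi> s x = x)) \<and>
       (\<forall>s\<in>S. \<forall>t\<in>S. \<phi> (mul s t) = \<phi> t \<circ> \<phi> s))"

definition min_partial_degree :: "'s set \<Rightarrow> ('s \<Rightarrow> 's \<Rightarrow> 's) \<Rightarrow> nat" where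
  "min_partial_degree S mul = (LEAST m. partial_faithful_action S mul m)"

definition min_total_degree :: "'s set \<Rightarrow> ('s \<Rightarrow> 's \<Rightarrow> 's) \<Rightarrow> nat" where
  "min_total_degree S mul = (LEAST m. total_faithful_action S mul m)"

text \<open>A permutation representation of degree n: a homomorphism into the
  symmetric group on {..<n} (every finite G-set is isomorphic to one of these).\<close>

definition faithful_perm_rep :: "('g, 'b) monoid_scheme \<Rightarrow> nat \<Rightarrow> ('g \<Rightarrow> nat \<Rightarrow> nat) \<Rightarrow> bool" where
  "faithful_perm_rep G n \<rho> \<longleftrightarrow> \<rho> \<in> hom G (BijGroup {..<n}) \<and> inj_on \<rho> (carrier G)"

definition Fix_perm :: "nat \<Rightarrow> (nat \<Rightarrow> nat) \<Rightarrow> nat set" where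
  "Fix_perm n p = {x \<in> {..<n}. p x = x}"

definition rep_orbit :: "('g, 'b) monoid_scheme \<Rightarrow> ('g \<Rightarrow> nat \<Rightarrow> nat) \<Rightarrow> nat \<Rightarrow> nat set" where
  "rep_orbit G \<rho> x = {\<rho> h x | h. h \<in> carrier G}"

definition iso_orbits :: "('g, 'b) monoid_scheme \<Rightarrow> ('g \<Rightarrow> nat \<Rightarrow> nat) \<Rightarrow> nat set \<Rightarrow> nat set \<Rightarrow> bool" where
  "iso_orbits G \<rho> O1 O2 \<longleftrightarrow> (\<exists>\<beta>. bij_betw \<beta> O1 O2 \<and>
      (\<forall>h\<in>carrier G. \<forall>x\<in>O1. \<beta> (\<rho> h x) = \<rho> h (\<beta> x)))"

definition no_iso_orbits :: "('g, 'b) monoid_scheme \<Rightarrow> nat \<Rightarrow> ('g \<Rightarrow> nat \<Rightarrow> nat) \<Rightarrow> bool" where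
  "no_iso_orbits G n \<rho> \<longleftrightarrow> (\<forall>x<n. \<forall>y<n. rep_orbit G \<rho> x \<noteq> rep_orbit G \<rho> y \<longrightarrow>
      \<not> iso_orbits G \<rho> (rep_orbit G \<rho> x) (rep_orbit G \<rho> y))"

end

theory Submission
  imports Defs
begin

lemma rep_Bij:
  assumes "faithful_perm_rep G n \<rho>" "h \<in> carrier G"
  shows "\<rho> h \<in> Bij {..<n}"
  using assms by (auto simp: faithful_perm_rep_def hom_def BijGroup_def)

lemma rep_mem:
  assumes "faithful_perm_rep G n \<rho>" "h \<in> carrier G" "x < n"
  shows "\<rho> h x < n"
  using Bij_imp_funcset[OF rep_Bij[OF assms(1,2)]] assms(3) by auto

lemma rep_mult:
  assumes "faithful_perm_rep G n \<rho>" "h \<in> carrier G" "k \<in> carrier G" "x < n"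
  shows "\<rho> (h \<otimes>\<^bsub>G\<^esub> k) x = \<rho> h (\<rho> k x)"
proof -
  have "\<rho> (h \<otimes>\<^bsub>G\<^esub> k) = \<rho> h \<otimes>\<^bsub>BijGroup {..<n}\<^esub> \<rho> k"
    using assms by (auto simp: faithful_perm_rep_def hom_def)
  then show ?thesis using rep_Bij[OF assms(1,2)] rep_Bij[OF assms(1,3)] assms(4)
    by (simp add: BijGroup_def compose_def)
qed

lemma rep_one:
  assumes "group G" "faithful_perm_rep G n \<rho>" "x < n"
  shows "\<rho> \<one>\<^bsub>G\<^esub> x = x"
proof -
  have "\<rho> \<one>\<^bsub>G\<^esub> = \<one>\<^bsub>BijGroup {..<n}\<^esub>"
    using assms hom_one[of \<rho> G "BijGroup {..<n}"] group_BijGroup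
    by (auto simp: faithful_perm_rep_def group_hom_def group_hom_axioms_def)
  then show ?thesis using assms(3) by (simp add: BijGroup_def)
qed

lemma rep_ext:
  assumes "faithful_perm_rep G n \<rho>" "h \<in> carrier G" "x \<ge> n"
  shows "\<rho> h x = undefined"
  using Bij_imp_extensional[OF rep_Bij[OF assms(1,2)]] assms(3)
  by (simp add: extensional_def)

lemma rep_inj:
  assumes "faithful_perm_rep G n \<rho>" "h \<in> carrier G" "k \<in> carrier G"
    "\<And>x. x < n \<Longrightarrow> \<rho> h x = \<rho> k x"
  shows "h = k"
proof -
  have "\<rho> h = \<rho> k"
  proof
    fix x show "\<rho> h x = \<rho> k x"
      using assms rep_ext[OF assms(1)] by (cases "x < n") auto
  qed
  then show ?thesis using assms(1-3) by (auto simp: faithful_perm_rep_def inj_on_def)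
qed

lemma transport:
  fixes G :: "('g, 'b) monoid_scheme" (structure) and act :: "'g \<Rightarrow> 'a \<Rightarrow> 'a"
  assumes G: "group G" and fin: "finite A"
    and cl: "\<And>h a. h \<in> carrier G \<Longrightarrow> a \<in> A \<Longrightarrow> act h a \<in> A"
    and ml: "\<And>h k a. h \<in> carrier G \<Longrightarrow> k \<in> carrier G \<Longrightarrow> a \<in> A \<Longrightarrow>
               act (h \<otimes>\<^bsub>G\<^esub> k) a = act h (act k a)"
    and on: "\<And>a. a \<in> A \<Longrightarrow> act \<one>\<^bsub>G\<^esub> a = a"
    and fa: "\<And>h k. h \<in> carrier G \<Longrightarrow> k \<in> carrier G \<Longrightarrow> (\<forall>a\<in>A. act h a = act k a) \<Longrightarrow> h = k"
    and g: "g \<in> carrier G"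
  shows "\<exists>\<rho>. faithful_perm_rep G (card A) \<rho> \<and>
            card (Fix_perm (card A) (\<rho> g)) = card {a\<in>A. act g a = a}"
proof -
  interpret group G by (rule G)
  define n where "n = card A"
  obtain e where e: "bij_betw e {0..<n} A" using ex_bij_betw_nat_finite[OF fin] n_def by blast
  have lt: "{0..<n} = {..<n}" by auto
  with e have e': "bij_betw e {..<n} A" by simp
  define d where "d = inv_into {..<n} e"
  have d: "bij_betw d A {..<n}" using e' bij_betw_inv_into d_def by blast
  have de: "\<And>i. i < n \<Longrightarrow> d (e i) = i" using e' d_def
    by (simp add: bij_betw_inv_into_left)
  have ed: "\<And>a. a \<in> A \<Longrightarrow> e (d a) = a" using e' d_def
    by (simp add: bij_betw_inv_into_right)
  have eA: "\<And>i. i < n \<Longrightarrow> e i \<in> A" using e' bij_betwE by blast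
  have dA: "\<And>a. a \<in> A \<Longrightarrow> d a < n" using d bij_betwE by blast
  define \<rho> where "\<rho> h = (\<lambda>i\<in>{..<n}. d (act h (e i)))" for h
  have inv_act: "act (inv h) (act h a) = a" if "h \<in> carrier G" "a \<in> A" for h a
    using that ml[of "inv h" h a] on by simp
  have inv_act2: "act h (act (inv h) a) = a" if "h \<in> carrier G" "a \<in> A" for h a
    using that ml[of h "inv h" a] on by simp
  have rB: "\<rho> h \<in> Bij {..<n}" if h: "h \<in> carrier G" for h
  proof -
    have "bij_betw (\<rho> h) {..<n} {..<n}"
      by (rule bij_betw_byWitness[where f'="\<rho> (inv h)"])
         (auto simp: \<rho>_def h de ed eA dA cl inv_act inv_act2)
    then show ?thesis unfolding Bij_def \<rho>_def by auto
  qed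
  have hom: "\<rho> \<in> hom G (BijGroup {..<n})"
  proof (rule homI)
    fix h assume "h \<in> carrier G" then show "\<rho> h \<in> carrier (BijGroup {..<n})"
      using rB by (simp add: BijGroup_def)
  next
    fix h k assume hk: "h \<in> carrier G" "k \<in> carrier G"
    show "\<rho> (h \<otimes> k) = \<rho> h \<otimes>\<^bsub>BijGroup {..<n}\<^esub> \<rho> k"
      using rB[OF hk(1)] rB[OF hk(2)]
      by (auto simp: BijGroup_def compose_def \<rho>_def hk ml ed eA cl dA intro!: ext)
  qed
  have inj: "inj_on \<rho> (carrier G)"
  proof (rule inj_onI)
    fix h k assume hk: "h \<in> carrier G" "k \<in> carrier G" and eq: "\<rho> h = \<rho> k"
    show "h = k"
    proof (rule fa[OF hk], rule ballI)
      fix a assume a: "a \<in> A"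
      have "\<rho> h (d a) = \<rho> k (d a)" using eq by simp
      then have "d (act h a) = d (act k a)" using a by (simp add: \<rho>_def dA ed)
      then show "act h a = act k a"
        using a hk cl ed by metis
    qed
  qed
  have fix_eq: "e ` Fix_perm n (\<rho> g) = {a\<in>A. act g a = a}"
  proof
    show "e ` Fix_perm n (\<rho> g) \<subseteq> {a\<in>A. act g a = a}"
    proof
      fix b assume "b \<in> e ` Fix_perm n (\<rho> g)"
      then obtain i where i: "i < n" "d (act g (e i)) = i" "b = e i"
        by (auto simp: Fix_perm_def \<rho>_def)
      then have "e (d (act g (e i))) = e i" by simp
      moreover have "e (d (act g (e i))) = act g (e i)" using i eA g cl ed by blast
      ultimately show "b \<in> {a\<in>A. act g a = a}" using i eA by auto
    qed
  next
    show "{a\<in>A. act g a = a} \<subseteq> e ` Fix_perm n (\<rho> g)"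
    proof
      fix a assume a: "a \<in> {a\<in>A. act g a = a}"
      then have "d a \<in> Fix_perm n (\<rho> g)" by (auto simp: Fix_perm_def \<rho>_def dA ed)
      then show "a \<in> e ` Fix_perm n (\<rho> g)" using a ed by (metis (no_types, lifting) image_eqI mem_Collect_eq)
    qed
  qed
  have "inj_on e (Fix_perm n (\<rho> g))"
    using e' by (rule inj_on_subset[OF bij_betw_imp_inj_on]) (auto simp: Fix_perm_def)
  then have "card (Fix_perm n (\<rho> g)) = card {a\<in>A. act g a = a}"
    using fix_eq card_image by fastforce
  then show ?thesis using hom inj n_def by (auto simp: faithful_perm_rep_def)
qed


lemma orbit_sub:
  assumes "group G" "faithful_perm_rep G n \<rho>" "z < n"
  shows "rep_orbit G \<rho> z \<subseteq> {..<n}"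
  using assms rep_mem[OF assms(2)] by (auto simp: rep_orbit_def)

lemma orbit_self:
  assumes "group G" "faithful_perm_rep G n \<rho>" "z < n"
  shows "z \<in> rep_orbit G \<rho> z"
proof -
  have "\<rho> \<one>\<^bsub>G\<^esub> z = z" using rep_one[OF assms(1,2,3)] .
  moreover have "\<one>\<^bsub>G\<^esub> \<in> carrier G" using group.is_monoid[OF assms(1)] monoid.one_closed by blast
  ultimately show ?thesis unfolding rep_orbit_def by force
qed

lemma orbit_eq:
  assumes "group G" "faithful_perm_rep G n \<rho>" "z < n" "w \<in> rep_orbit G \<rho> z"
  shows "rep_orbit G \<rho> w = rep_orbit G \<rho> z"
proof -
  interpret group G by fact
  obtain h where h: "h \<in> carrier G" "w = \<rho> h z" using assms(4) by (auto simp: rep_orbit_def)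
  show ?thesis
  proof
    show "rep_orbit G \<rho> w \<subseteq> rep_orbit G \<rho> z"
    proof
      fix v assume "v \<in> rep_orbit G \<rho> w"
      then obtain k where k: "k \<in> carrier G" "v = \<rho> k w" by (auto simp: rep_orbit_def)
      then have "v = \<rho> (k \<otimes>\<^bsub>G\<^esub> h) z" using rep_mult[OF assms(2) k(1) h(1) assms(3)] h by simp
      then show "v \<in> rep_orbit G \<rho> z" using k h unfolding rep_orbit_def by blast
    qed
  next
    show "rep_orbit G \<rho> z \<subseteq> rep_orbit G \<rho> w"
    proof
      fix v assume "v \<in> rep_orbit G \<rho> z"
      then obtain k where k: "k \<in> carrier G" "v = \<rho> k z" by (auto simp: rep_orbit_def)
      have "\<rho> (k \<otimes>\<^bsub>G\<^esub> inv\<^bsub>G\<^esub> h) w = \<rho> (k \<otimes>\<^bsub>G\<^esub> inv\<^bsub>G\<^esub> h) (\<rho> h z)" using h by simp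
      also have "\<dots> = \<rho> (k \<otimes>\<^bsub>G\<^esub> inv\<^bsub>G\<^esub> h \<otimes>\<^bsub>G\<^esub> h) z"
        using rep_mult[OF assms(2) _ h(1) assms(3)] k h by simp
      also have "\<dots> = v" using k h by (simp add: m_assoc)
      finally have "v = \<rho> (k \<otimes>\<^bsub>G\<^esub> inv\<^bsub>G\<^esub> h) w" by simp
      moreover have "k \<otimes>\<^bsub>G\<^esub> inv\<^bsub>G\<^esub> h \<in> carrier G" using k h by simp
      ultimately show "v \<in> rep_orbit G \<rho> w" unfolding rep_orbit_def by blast
    qed
  qed
qed

lemma reduce_no_iso:
  fixes G :: "('g, 'b) monoid_scheme" (structure) and act :: "'g \<Rightarrow> nat \<Rightarrow> nat"
  assumes G: "group G" and g: "g \<in> carrier G"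
  shows "finite A \<Longrightarrow>
    (\<And>h a. h \<in> carrier G \<Longrightarrow> a \<in> A \<Longrightarrow> act h a \<in> A) \<Longrightarrow>
    (\<And>h k a. h \<in> carrier G \<Longrightarrow> k \<in> carrier G \<Longrightarrow> a \<in> A \<Longrightarrow>
               act (h \<otimes>\<^bsub>G\<^esub> k) a = act h (act k a)) \<Longrightarrow>
    (\<And>a. a \<in> A \<Longrightarrow> act \<one>\<^bsub>G\<^esub> a = a) \<Longrightarrow>
    (\<And>h k. h \<in> carrier G \<Longrightarrow> k \<in> carrier G \<Longrightarrow> (\<forall>a\<in>A. act h a = act k a) \<Longrightarrow> h = k) \<Longrightarrow>
    \<exists>n \<rho>. faithful_perm_rep G n \<rho> \<and> no_iso_orbits G n \<rho> \<and>
       2 * n - card (Fix_perm n (\<rho> g)) \<le> 2 * card A - card {a\<in>A. act g a = a}"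
proof (induction "card A" arbitrary: A act rule: less_induct)
  case (less A act)
  interpret group G by (rule G)
  obtain \<rho> where \<rho>: "faithful_perm_rep G (card A) \<rho>"
    and fx: "card (Fix_perm (card A) (\<rho> g)) = card {a\<in>A. act g a = a}"
    using transport[OF G less.prems g] by blast
  define n where "n = card A"
  note \<rho> = \<rho>[folded n_def]
  show ?case
  proof (cases "no_iso_orbits G n \<rho>")
    case True
    have "faithful_perm_rep G n \<rho> \<and> no_iso_orbits G n \<rho> \<and>
       2 * n - card (Fix_perm n (\<rho> g)) \<le> 2 * card A - card {a\<in>A. act g a = a}"
      using True \<rho> fx n_def by simp
    then show ?thesis by blast
  next
    case False
    then obtain x y where xy: "x < n" "y < n" "rep_orbit G \<rho> x \<noteq> rep_orbit G \<rho> y"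
      and iso: "iso_orbits G \<rho> (rep_orbit G \<rho> x) (rep_orbit G \<rho> y)"
      unfolding no_iso_orbits_def by blast
    define Ox where "Ox = rep_orbit G \<rho> x"
    define Oy where "Oy = rep_orbit G \<rho> y"
    obtain \<beta> where \<beta>: "bij_betw \<beta> Ox Oy"
      and \<beta>c: "\<And>h z. h \<in> carrier G \<Longrightarrow> z \<in> Ox \<Longrightarrow> \<beta> (\<rho> h z) = \<rho> h (\<beta> z)"
      using iso unfolding iso_orbits_def Ox_def Oy_def by blast
    have Oxs: "Ox \<subseteq> {..<n}" using orbit_sub[OF G \<rho> xy(1)] Ox_def by simp
    have Oys: "Oy \<subseteq> {..<n}" using orbit_sub[OF G \<rho> xy(2)] Oy_def by simp
    have xO: "x \<in> Ox" using orbit_self[OF G \<rho> xy(1)] Ox_def by simp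
    define A' where "A' = {..<n} - Ox"
    have finA': "finite A'" by (simp add: A'_def)
    have cardA': "card A' = n - card Ox" using Oxs by (simp add: A'_def card_Diff_subset finite_subset)
    have "A' \<subset> {..<n}" using xO xy(1) by (auto simp: A'_def)
    then have lt: "card A' < card A" using n_def
      by (metis card_lessThan finite_lessThan psubset_card_mono)
    have cl: "\<rho> h a \<in> A'" if "h \<in> carrier G" "a \<in> A'" for h a
    proof -
      have a: "a < n" "a \<notin> Ox" using that by (auto simp: A'_def)
      have "\<rho> h a \<in> rep_orbit G \<rho> a" using that unfolding rep_orbit_def by blast
      then have e1: "rep_orbit G \<rho> (\<rho> h a) = rep_orbit G \<rho> a" using orbit_eq[OF G \<rho> a(1)] by blast
      have "\<rho> h a \<notin> Ox"
      proof
        assume "\<rho> h a \<in> Ox"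
        then have "rep_orbit G \<rho> (\<rho> h a) = Ox" using orbit_eq[OF G \<rho> xy(1)] Ox_def by blast
        then show False using e1 orbit_self[OF G \<rho> a(1)] a(2) by simp
      qed
      then show ?thesis using rep_mem[OF \<rho> that(1) a(1)] by (simp add: A'_def)
    qed
    have fa: "h = k" if hk: "h \<in> carrier G" "k \<in> carrier G" and eq: "\<forall>a\<in>A'. \<rho> h a = \<rho> k a" for h k
    proof (rule rep_inj[OF \<rho> hk])
      fix a assume a: "a < n"
      show "\<rho> h a = \<rho> k a"
      proof (cases "a \<in> Ox")
        case False then show ?thesis using eq a by (simp add: A'_def)
      next
        case True
        have ba: "\<beta> a \<in> Oy" using \<beta> True bij_betwE by blast
        have "\<beta> a \<notin> Ox"
        proof
          assume "\<beta> a \<in> Ox"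
          then have "rep_orbit G \<rho> (\<beta> a) = Ox" using orbit_eq[OF G \<rho> xy(1)] Ox_def by blast
          moreover have "rep_orbit G \<rho> (\<beta> a) = Oy" using orbit_eq[OF G \<rho> xy(2)] Oy_def ba by blast
          ultimately show False using xy(3) Ox_def Oy_def by simp
        qed
        then have "\<beta> a \<in> A'" using ba Oys by (auto simp: A'_def)
        then have "\<rho> h (\<beta> a) = \<rho> k (\<beta> a)" using eq by blast
        then have "\<beta> (\<rho> h a) = \<beta> (\<rho> k a)" using \<beta>c True hk by simp
        moreover have "\<rho> h a \<in> Ox" "\<rho> k a \<in> Ox"
        proof -
          have "rep_orbit G \<rho> a = Ox" using orbit_eq[OF G \<rho> xy(1)] True Ox_def by blast
          moreover have "\<rho> h a \<in> rep_orbit G \<rho> a" "\<rho> k a \<in> rep_orbit G \<rho> a"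
            using hk unfolding rep_orbit_def by blast+
          ultimately show "\<rho> h a \<in> Ox" "\<rho> k a \<in> Ox" by auto
        qed
        ultimately show ?thesis using \<beta> by (meson bij_betw_imp_inj_on inj_onD)
      qed
    qed
    have A'n: "\<And>a. a \<in> A' \<Longrightarrow> a < n" by (simp add: A'_def)
    obtain n' \<rho>' where r': "faithful_perm_rep G n' \<rho>'" "no_iso_orbits G n' \<rho>'"
      "2 * n' - card (Fix_perm n' (\<rho>' g)) \<le> 2 * card A' - card {a\<in>A'. \<rho> g a = a}"
    proof -
      have ml': "\<And>h k a. h \<in> carrier G \<Longrightarrow> k \<in> carrier G \<Longrightarrow> a \<in> A' \<Longrightarrow>
               \<rho> (h \<otimes> k) a = \<rho> h (\<rho> k a)" using rep_mult[OF \<rho>] A'n by blast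
      have one': "\<And>a. a \<in> A' \<Longrightarrow> \<rho> \<one> a = a" using rep_one[OF G \<rho>] A'n by blast
      show ?thesis using less.hyps[OF lt finA' cl ml' one' fa] that by blast
    qed
    define F where "F = Fix_perm n (\<rho> g)"
    have F': "{a\<in>A'. \<rho> g a = a} = F - Ox" by (auto simp: F_def Fix_perm_def A'_def)
    have Fs: "F \<subseteq> {..<n}" by (auto simp: F_def Fix_perm_def)
    have "card F \<le> card ((F - Ox) \<union> Ox)"
      by (rule card_mono) (use Oxs Fs finite_subset in auto)
    also have "\<dots> \<le> card (F - Ox) + card Ox" by (rule card_Un_le)
    finally have "card F \<le> card (F - Ox) + card Ox" .
    moreover have "card F \<le> n" using card_mono[OF finite_lessThan Fs] by simp
    moreover have "card Ox \<le> n" using card_mono[OF finite_lessThan Oxs] by simp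
    ultimately have "2 * card A' - card {a\<in>A'. \<rho> g a = a} \<le> 2 * n - card F"
      unfolding cardA' F' by linarith
    then have "2 * n' - card (Fix_perm n' (\<rho>' g)) \<le> 2 * card A - card {a\<in>A. act g a = a}"
      using r'(3) fx n_def F_def by simp
    then show ?thesis using r'(1,2) by blast
  qed
qed


lemma total_from_act:
  fixes act :: "'s \<Rightarrow> 'p \<Rightarrow> 'p"
  assumes fin: "finite P"
    and cl: "\<And>s p. s \<in> S \<Longrightarrow> p \<in> P \<Longrightarrow> act s p \<in> P"
    and ml: "\<And>s t p. s \<in> S \<Longrightarrow> t \<in> S \<Longrightarrow> p \<in> P \<Longrightarrow> act (mul s t) p = act t (act s p)"
    and fa: "\<And>s t. s \<in> S \<Longrightarrow> t \<in> S \<Longrightarrow> (\<forall>p\<in>P. act s p = act t p) \<Longrightarrow> s = t"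
  shows "total_faithful_action S mul (card P)"
proof -
  define m where "m = card P"
  obtain e where e: "bij_betw e {0..<m} P" using ex_bij_betw_nat_finite[OF fin] m_def by blast
  have lt: "{0..<m} = {..<m}" by auto
  with e have e': "bij_betw e {..<m} P" by simp
  define d where "d = inv_into {..<m} e"
  have d: "bij_betw d P {..<m}" using e' bij_betw_inv_into d_def by blast
  have de: "\<And>i. i < m \<Longrightarrow> d (e i) = i" using e' d_def
    by (simp add: bij_betw_inv_into_left)
  have ed: "\<And>a. a \<in> P \<Longrightarrow> e (d a) = a" using e' d_def
    by (simp add: bij_betw_inv_into_right)
  have eP: "\<And>i. i < m \<Longrightarrow> e i \<in> P" using e' bij_betwE by blast
  have dP: "\<And>a. a \<in> P \<Longrightarrow> d a < m" using d bij_betwE by blast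
  define \<phi> where "\<phi> s = (\<lambda>x. if x < m then d (act s (e x)) else x)" for s
  have "inj_on \<phi> S"
  proof (rule inj_onI)
    fix s t assume st: "s \<in> S" "t \<in> S" "\<phi> s = \<phi> t"
    show "s = t"
    proof (rule fa[OF st(1,2)], rule ballI)
      fix p assume p: "p \<in> P"
      have "\<phi> s (d p) = \<phi> t (d p)" using st by simp
      then have "d (act s p) = d (act t p)" using p by (simp add: \<phi>_def dP ed)
      then have "e (d (act s p)) = e (d (act t p))" by simp
      then show "act s p = act t p" using ed cl st p by simp
    qed
  qed
  moreover have "\<forall>s\<in>S. \<forall>x. (x < m \<longrightarrow> \<phi> s x < m) \<and> (m \<le> x \<longrightarrow> \<phi> s x = x)"
    by (auto simp: \<phi>_def dP cl eP)
  moreover have "\<forall>s\<in>S. \<forall>t\<in>S. \<phi> (mul s t) = \<phi> t \<circ> \<phi> s"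
    by (auto simp: \<phi>_def dP cl eP ml ed intro!: ext)
  ultimately show ?thesis unfolding total_faithful_action_def m_def by blast
qed

lemma total_to_partial:
  assumes "total_faithful_action S mul m"
  shows "partial_faithful_action S mul m"
proof -
  obtain \<phi> where inj: "inj_on \<phi> S"
    and rng: "\<forall>s\<in>S. \<forall>x. (x < m \<longrightarrow> \<phi> s x < m) \<and> (m \<le> x \<longrightarrow> \<phi> s x = x)"
    and ml: "\<forall>s\<in>S. \<forall>t\<in>S. \<phi> (mul s t) = \<phi> t \<circ> \<phi> s"
    using assms unfolding total_faithful_action_def by blast
  define \<psi> where "\<psi> s = (\<lambda>x. if x < m then Some (\<phi> s x) else None)" for s
  have "inj_on \<psi> S"
  proof (rule inj_onI)
    fix s t assume st: "s \<in> S" "t \<in> S" "\<psi> s = \<psi> t"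
    have "\<phi> s = \<phi> t"
    proof
      fix x show "\<phi> s x = \<phi> t x"
      proof (cases "x < m")
        case True then show ?thesis using fun_cong[OF st(3), of x] by (simp add: \<psi>_def)
      next
        case False then show ?thesis using rng st by auto
      qed
    qed
    then show "s = t" using inj st by (auto dest: inj_onD)
  qed
  moreover have "\<forall>s\<in>S. \<forall>x. (x < m \<longrightarrow> (\<forall>y. \<psi> s x = Some y \<longrightarrow> y < m)) \<and> (m \<le> x \<longrightarrow> \<psi> s x = None)"
    using rng by (auto simp: \<psi>_def)
  moreover have "\<forall>s\<in>S. \<forall>t\<in>S. \<psi> (mul s t) = (\<lambda>x. Option.bind (\<psi> s x) (\<psi> t))"
    using rng ml by (auto simp: \<psi>_def intro!: ext)
  ultimately show ?thesis unfolding partial_faithful_action_def by blast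
qed


lemma rees_mult_simp: "rees_mult G C (i, h, j) (k, h', l) = (i, h \<otimes>\<^bsub>G\<^esub> C j k \<otimes>\<^bsub>G\<^esub> h', l)"
  by (simp add: rees_mult_def)

lemma rees_carrier_iff: "(i, h, j) \<in> rees_carrier G \<longleftrightarrow> i \<in> {1,2} \<and> h \<in> carrier G \<and> j \<in> {1,2}"
  by (simp add: rees_carrier_def)

lemma rep_to_total:
  fixes G :: "('g, 'b) monoid_scheme" (structure)
  assumes G: "group G" and g: "g \<in> carrier G" "g \<noteq> \<one>" and \<rho>: "faithful_perm_rep G n \<rho>"
  shows "total_faithful_action (rees_carrier G) (rees_mult G (sandwich_C G g))
           (2 * n - card (Fix_perm n (\<rho> g)))"
proof -
  interpret group G by (rule G)
  define C where "C = sandwich_C G g"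
  have Cc: "C j k \<in> carrier G" for j k using g by (simp add: C_def sandwich_C_def)
  define fx where "fx z \<longleftrightarrow> \<rho> g z = z" for z
  define r where "r y h = \<rho> (inv h) y" for y h
  define nm where "nm z l = (z, if l = (2::nat) \<and> fx z then 1 else l)" for z l
  define act where "act s p = (case s of (k, h, l) \<Rightarrow> case p of (y, j) \<Rightarrow> nm (r y (C j k \<otimes> h)) l)" for s p
  define P where "P = {(y, j). y < n \<and> (j = (1::nat) \<or> (j = 2 \<and> \<not> fx y))}"
  have r_lt: "r y h < n" if "y < n" "h \<in> carrier G" for y h
    using rep_mem[OF \<rho> _ that(1)] that(2) by (simp add: r_def)
  have r_mult: "r y (a \<otimes> b) = r (r y a) b" if "y < n" "a \<in> carrier G" "b \<in> carrier G" for y a b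
    using that rep_mult[OF \<rho>, of "inv b" "inv a" y] by (simp add: r_def inv_mult_group)
  have r_one: "r y \<one> = y" if "y < n" for y using rep_one[OF G \<rho> that] by (simp add: r_def)
  have r_inv: "r (r y h) (inv h) = y" if "y < n" "h \<in> carrier G" for y h
    using r_mult[of y h "inv h"] that r_one by simp
  have r_fix: "r z g = z" if "z < n" "fx z" for z
  proof -
    have "r z g = \<rho> (inv g) (\<rho> g z)" using that by (simp add: r_def fx_def)
    also have "\<dots> = \<rho> (inv g \<otimes> g) z" using rep_mult[OF \<rho> inv_closed[OF g(1)] g(1) that(1)] g by simp
    also have "\<dots> = z" using rep_one[OF G \<rho> that(1)] g by simp
    finally show ?thesis .
  qed
  have fx_r: "fx z" if "z < n" "r z g = z" for z
  proof -
    have "\<rho> g z = \<rho> g (\<rho> (inv g) z)" using that by (simp add: r_def)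
    also have "\<dots> = \<rho> (g \<otimes> inv g) z" using rep_mult[OF \<rho> g(1) inv_closed[OF g(1)] that(1)] g by simp
    also have "\<dots> = z" using rep_one[OF G \<rho> that(1)] g by simp
    finally show ?thesis by (simp add: fx_def)
  qed
  obtain w where w: "w < n" "\<not> fx w"
  proof -
    have "g = \<one>" if "\<forall>w<n. fx w"
      by (rule rep_inj[OF \<rho> g(1) one_closed]) (use that rep_one[OF G \<rho>] fx_def in auto)
    then show ?thesis using that g(2) by blast
  qed
  have finP: "finite P" unfolding P_def
    by (rule finite_subset[of _ "{..<n} \<times> {1,2}"]) auto
  have Peq: "P = ({..<n} \<times> {1}) \<union> (({..<n} - Fix_perm n (\<rho> g)) \<times> {2})"
    by (auto simp: P_def Fix_perm_def fx_def)
  have cardP: "card P = 2 * n - card (Fix_perm n (\<rho> g))"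
  proof -
    have Fs: "Fix_perm n (\<rho> g) \<subseteq> {..<n}" by (auto simp: Fix_perm_def)
    have "card P = card ({..<n} \<times> {1::nat}) + card (({..<n} - Fix_perm n (\<rho> g)) \<times> {2::nat})"
      unfolding Peq by (rule card_Un_disjoint) auto
    also have "\<dots> = n + (n - card (Fix_perm n (\<rho> g)))"
      using Fs by (simp add: card_cartesian_product card_Diff_subset finite_subset)
    also have "\<dots> = 2 * n - card (Fix_perm n (\<rho> g))"
      using card_mono[OF finite_lessThan Fs] by simp
    finally show ?thesis .
  qed
  have nmP: "nm z l \<in> P" if "z < n" "l \<in> {1,2}" for z l
    using that by (auto simp: nm_def P_def)
  have cl: "act s p \<in> P" if sp: "s \<in> rees_carrier G" "p \<in> P" for s p
  proof -
    obtain k h l where s: "s = (k, h, l)" "k \<in> {1,2}" "h \<in> carrier G" "l \<in> {1,2}"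
      using sp(1) by (cases s) (auto simp: rees_carrier_def)
    obtain y j where pj: "p = (y, j)" "y < n" using sp(2) by (cases p) (auto simp: P_def)
    have "act s p = nm (r y (C j k \<otimes> h)) l" by (simp add: act_def s pj)
    then show ?thesis using nmP[OF r_lt[OF pj(2)] s(4)] Cc s(3) by simp
  qed
  have ml: "act (rees_mult G C s t) p = act t (act s p)"
    if st: "s \<in> rees_carrier G" "t \<in> rees_carrier G" and p: "p \<in> P" for s t p
  proof -
    obtain k h l where s: "s = (k, h, l)" "k \<in> {1,2}" "h \<in> carrier G" "l \<in> {1,2}"
      using st(1) by (cases s) (auto simp: rees_carrier_def)
    obtain k2 h2 l2 where t: "t = (k2, h2, l2)" "k2 \<in> {1,2}" "h2 \<in> carrier G" "l2 \<in> {1,2}"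
      using st(2) by (cases t) (auto simp: rees_carrier_def)
    obtain y j where pj: "p = (y, j)" "y < n" using p by (cases p) (auto simp: P_def)
    define z where "z = r y (C j k \<otimes> h)"
    have z: "z < n" using z_def r_lt pj s Cc by simp
    define l' where "l' = (if l = 2 \<and> fx z then 1 else l)"
    have as: "act s p = (z, l')" by (simp add: act_def s pj z_def l'_def nm_def)
    have key: "r z (C l' k2 \<otimes> h2) = r z (C l k2 \<otimes> h2)"
    proof (cases "l' = l")
      case False
      then have "l = 2" "fx z" "l' = 1" by (auto simp: l'_def split: if_splits)
      then show ?thesis using t r_mult[OF z g(1) t(3)] r_fix[OF z] by (auto simp: C_def sandwich_C_def)
    qed simp
    have "act (rees_mult G C s t) p = nm (r y (C j k \<otimes> (h \<otimes> C l k2 \<otimes> h2))) l2"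
      by (simp add: act_def s t pj rees_mult_def)
    also have "r y (C j k \<otimes> (h \<otimes> C l k2 \<otimes> h2)) = r z (C l k2 \<otimes> h2)"
      using r_mult[OF pj(2), of "C j k \<otimes> h" "C l k2 \<otimes> h2"] Cc s t
      by (simp add: z_def m_assoc)
    also have "nm (r z (C l k2 \<otimes> h2)) l2 = act t (z, l')"
      using key by (simp add: act_def t)
    also have "act t (z, l') = act t (act s p)" using as by simp
    finally show ?thesis .
  qed
  have fst_act: "fst (act (k, h, l) (y, j)) = r y (C j k \<otimes> h)" for k h l y j
    by (simp add: act_def nm_def)
  have snd_act: "snd (act (k, h, l) (y, j)) = (if l = 2 \<and> fx (r y (C j k \<otimes> h)) then 1 else l)" for k h l y j
    by (simp add: act_def nm_def)
  have C1: "C (Suc 0) k = \<one>" for k by (simp add: C_def sandwich_C_def)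
  have fa: "s = t" if st: "s \<in> rees_carrier G" "t \<in> rees_carrier G"
    and eq: "\<forall>p\<in>P. act s p = act t p" for s t
  proof -
    obtain k h l where s: "s = (k, h, l)" "k \<in> {1,2}" "h \<in> carrier G" "l \<in> {1,2}"
      using st(1) by (cases s) (auto simp: rees_carrier_def)
    obtain k2 h2 l2 where t: "t = (k2, h2, l2)" "k2 \<in> {1,2}" "h2 \<in> carrier G" "l2 \<in> {1,2}"
      using st(2) by (cases t) (auto simp: rees_carrier_def)
    have P1: "(y, 1) \<in> P" if "y < n" for y using that by (simp add: P_def)
    have rw: "r (\<rho> a w) a = w" if "a \<in> carrier G" for a
    proof -
      have "r (\<rho> a w) a = \<rho> (inv a) (\<rho> a w)" by (simp add: r_def)
      also have "\<dots> = \<rho> (inv a \<otimes> a) w" using rep_mult[OF \<rho> inv_closed[OF that] that w(1)] that by simp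
      also have "\<dots> = w" using rep_one[OF G \<rho> w(1)] that by simp
      finally show ?thesis .
    qed
    have ll: "l = l2"
    proof (rule ccontr)
      assume ne: "l \<noteq> l2"
      show False
      proof (cases "l = 2")
        case True
        then have l2: "l2 = 1" using ne t(4) by auto
        define y where "y = \<rho> h w"
        have y: "y < n" using rep_mem[OF \<rho> s(3) w(1)] y_def by simp
        have "snd (act s (y, 1)) = 2" using True rw[OF s(3)] w(2)
          using s(3) by (simp add: s snd_act C1 y_def)
        moreover have "snd (act t (y, 1)) = 1" using l2 by (simp add: t snd_act)
        ultimately show False using eq P1[OF y] by auto
      next
        case False
        then have l: "l = 1" "l2 = 2" using ne s(4) t(4) by auto
        define y where "y = \<rho> h2 w"
        have y: "y < n" using rep_mem[OF \<rho> t(3) w(1)] y_def by simp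
        have "snd (act t (y, 1)) = 2" using l rw[OF t(3)] w(2)
          using t(3) by (simp add: t snd_act C1 y_def)
        moreover have "snd (act s (y, 1)) = 1" using l by (simp add: s snd_act)
        ultimately show False using eq P1[OF y] by auto
      qed
    qed
    have hh: "h = h2"
    proof -
      have "inv h = inv h2"
      proof (rule rep_inj[OF \<rho>])
        show "inv h \<in> carrier G" "inv h2 \<in> carrier G" using s t by auto
        fix y assume y: "y < n"
        have "fst (act s (y, 1)) = fst (act t (y, 1))" using eq P1[OF y] by auto
        then show "\<rho> (inv h) y = \<rho> (inv h2) y" using s t by (simp add: fst_act C1 r_def)
      qed
      then show ?thesis using s t by (metis inv_inv)
    qed
    have kk: "k = k2"
    proof (rule ccontr)
      assume ne: "k \<noteq> k2"
      have P2: "(w, 2) \<in> P" using w by (simp add: P_def)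
      have e: "r w (C 2 k \<otimes> h) = r w (C 2 k2 \<otimes> h)"
        using eq P2 fst_act[of k h l w 2] fst_act[of k2 h2 l2 w 2] s t hh by auto
      have rg: "r w (g \<otimes> h) = r (r w g) h" using r_mult[OF w(1) g(1) s(3)] .
      have rh: "r w (\<one> \<otimes> h) = r w h" using s by simp
      have "r w g = w"
      proof -
        have "r (r w g) h = r w h"
          using e ne s(2) t(2) rg rh by (auto simp: C_def sandwich_C_def)
        then have "r (r (r w g) h) (inv h) = r (r w h) (inv h)" by simp
        then show ?thesis using r_inv[OF r_lt[OF w(1) g(1)] s(3)] r_inv[OF w(1) s(3)] by simp
      qed
      then show False using fx_r[OF w(1)] w(2) by simp
    qed
    show ?thesis using s t ll hh kk by simp
  qed
  have "total_faithful_action (rees_carrier G) (rees_mult G C) (card P)"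
    by (rule total_from_act[OF finP cl ml fa]) auto
  then show ?thesis using cardP C_def by simp
qed


lemma partial_lower:
  fixes G :: "('g, 'b) monoid_scheme" (structure)
  assumes G: "group G" and g: "g \<in> carrier G"
    and pa: "partial_faithful_action (rees_carrier G) (rees_mult G (sandwich_C G g)) m"
  shows "\<exists>n \<rho>. faithful_perm_rep G n \<rho> \<and> 2 * n - card (Fix_perm n (\<rho> g)) \<le> m"
proof -
  interpret group G by (rule G)
  define S where "S = rees_carrier G"
  define mul where "mul = rees_mult G (sandwich_C G g)"
  obtain \<phi> :: "nat \<times> 'g \<times> nat \<Rightarrow> nat \<Rightarrow> nat option" where inj: "inj_on \<phi> S"
    and rng: "\<forall>s\<in>S. \<forall>x. (x < m \<longrightarrow> (\<forall>y. \<phi> s x = Some y \<longrightarrow> y < m)) \<and> (m \<le> x \<longrightarrow> \<phi> s x = None)"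
    and law0: "\<forall>s\<in>S. \<forall>t\<in>S. \<phi> (mul s t) = (\<lambda>x. Option.bind (\<phi> s x) (\<phi> t))"
    using pa unfolding partial_faithful_action_def S_def mul_def by blast
  have law: "\<phi> (mul s t) x = Option.bind (\<phi> s x) (\<phi> t)" if "s \<in> S" "t \<in> S" for s t x
    using law0 that by simp
  have rg: "y < m" if "s \<in> S" "x < m" "\<phi> s x = Some y" for s x y using rng that by blast
  have none: "\<phi> s x = None" if "s \<in> S" "\<not> x < m" for s x using rng that by auto
  define E :: "'g \<Rightarrow> nat \<times> 'g \<times> nat" where "E h = ((1::nat), h, (1::nat))" for h
  define e1 where "e1 = E \<one>"
  define e2 where "e2 = ((1::nat), \<one>, (2::nat))"
  define t0 where "t0 = ((2::nat), \<one>, (1::nat))"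
  have ES: "E h \<in> S" if "h \<in> carrier G" for h using that by (simp add: E_def S_def rees_carrier_def)
  have e1S: "e1 \<in> S" by (simp add: e1_def ES)
  have e2S: "e2 \<in> S" by (simp add: e2_def S_def rees_carrier_def)
  have t0S: "t0 \<in> S" by (simp add: t0_def S_def rees_carrier_def)
  have mEE: "mul (E a) (E b) = E (a \<otimes> b)" if "a \<in> carrier G" "b \<in> carrier G" for a b
    using that by (simp add: mul_def E_def rees_mult_def sandwich_C_def)
  have m22: "mul e2 e2 = e2" by (simp add: mul_def e2_def rees_mult_def sandwich_C_def)
  have m21: "mul e2 e1 = e1" by (simp add: mul_def e2_def e1_def E_def rees_mult_def sandwich_C_def)
  have m2t: "mul e2 t0 = E g" using g by (simp add: mul_def e2_def t0_def E_def rees_mult_def sandwich_C_def)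
  have m1t: "mul e1 t0 = e1" by (simp add: mul_def e1_def t0_def E_def rees_mult_def sandwich_C_def)
  define A1 where "A1 = {a. a < m \<and> \<phi> e1 a = Some a}"
  define A2 where "A2 = {a. a < m \<and> \<phi> e2 a = Some a}"
  have A1e: "\<phi> e1 a = Some a" if "a \<in> A1" for a using that by (simp add: A1_def)
  have exb: "\<exists>b. \<phi> (E h) a = Some b \<and> b \<in> A1" if a: "a \<in> A1" and h: "h \<in> carrier G" for a h
  proof -
    have "\<phi> (mul (E h) (E (inv h))) a = Option.bind (\<phi> (E h) a) (\<phi> (E (inv h)))"
      using law ES h by simp
    moreover have "mul (E h) (E (inv h)) = e1" using mEE h by (simp add: e1_def)
    ultimately have "Some a = Option.bind (\<phi> (E h) a) (\<phi> (E (inv h)))" using A1e[OF a] by simp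
    then have "\<phi> (E h) a \<noteq> None" by (cases "\<phi> (E h) a") auto
    then obtain b where b: "\<phi> (E h) a = Some b" by blast
    have bm: "b < m" using rg[OF ES[OF h] _ b] a by (simp add: A1_def)
    have "\<phi> (mul (E h) e1) a = Option.bind (\<phi> (E h) a) (\<phi> e1)" using law ES h e1S by simp
    moreover have "mul (E h) e1 = E h" using mEE h by (simp add: e1_def)
    ultimately have "\<phi> e1 b = Some b" using b by simp
    then show ?thesis using b bm by (auto simp: A1_def)
  qed
  define act where "act h a = the (\<phi> (E h) a)" for h a
  have actE: "\<phi> (E h) a = Some (act h a)" and actA: "act h a \<in> A1"
    if "a \<in> A1" "h \<in> carrier G" for a h
    using exb[OF that] by (auto simp: act_def)
  have act_mult: "act (h \<otimes> k) a = act k (act h a)" if "a \<in> A1" "h \<in> carrier G" "k \<in> carrier G" for h k a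
  proof -
    have "\<phi> (E (h \<otimes> k)) a = Option.bind (\<phi> (E h) a) (\<phi> (E k))"
      using law[OF ES ES, of h k a] mEE that by simp
    also have "\<dots> = Some (act k (act h a))" using actE that actA by simp
    finally show ?thesis using actE[of a "h \<otimes> k"] that by simp
  qed
  have act_one: "act \<one> a = a" if "a \<in> A1" for a
    using actE[OF that one_closed] A1e[OF that] by (simp add: e1_def)
  have act_fa: "h = k" if hk: "h \<in> carrier G" "k \<in> carrier G" and eq: "\<forall>a\<in>A1. act h a = act k a" for h k
  proof -
    have "\<phi> (E h) = \<phi> (E k)"
    proof
      fix x
      show "\<phi> (E h) x = \<phi> (E k) x"
      proof (cases "x < m")
        case False then show ?thesis using none ES hk by simp
      next
        case True
        have dec: "\<phi> (E q) x = Option.bind (\<phi> e1 x) (\<phi> (E q))" if "q \<in> carrier G" for q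
          using law[OF e1S ES[OF that], of x] mEE[OF one_closed that] that by (simp add: e1_def)
        show ?thesis
        proof (cases "\<phi> e1 x")
          case None then show ?thesis using dec hk by simp
        next
          case (Some b)
          have bm: "b < m" using rg[OF e1S True Some] .
          have "\<phi> e1 x = Option.bind (\<phi> e1 x) (\<phi> e1)" using law[OF e1S e1S, of x] mEE
            by (simp add: e1_def)
          then have "\<phi> e1 b = Some b" using Some by simp
          then have bA: "b \<in> A1" using bm by (simp add: A1_def)
          show ?thesis using dec[OF hk(1)] dec[OF hk(2)] Some actE[OF bA hk(1)] actE[OF bA hk(2)] eq bA
            by simp
        qed
      qed
    qed
    then have "E h = E k" using inj ES hk by (auto dest: inj_onD)
    then show ?thesis by (simp add: E_def)
  qed
  define act' where "act' h a = act (inv h) a" for h a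
  have finA1: "finite A1" by (simp add: A1_def)
  obtain \<rho> where \<rho>: "faithful_perm_rep G (card A1) \<rho>"
    and fx: "card (Fix_perm (card A1) (\<rho> g)) = card {a\<in>A1. act' g a = a}"
  proof -
    have "\<exists>\<rho>. faithful_perm_rep G (card A1) \<rho> \<and>
            card (Fix_perm (card A1) (\<rho> g)) = card {a\<in>A1. act' g a = a}"
    proof (rule transport[OF G finA1 _ _ _ _ g])
      show "act' h a \<in> A1" if "h \<in> carrier G" "a \<in> A1" for h a
        using actA that by (simp add: act'_def)
      show "act' (h \<otimes> k) a = act' h (act' k a)" if "h \<in> carrier G" "k \<in> carrier G" "a \<in> A1" for h k a
        using act_mult that by (simp add: act'_def inv_mult_group)
      show "act' \<one> a = a" if "a \<in> A1" for a using act_one that by (simp add: act'_def)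
      show "h = k" if "h \<in> carrier G" "k \<in> carrier G" "\<forall>a\<in>A1. act' h a = act' k a" for h k
        using act_fa[of "inv h" "inv k"] that by (simp add: act'_def) (metis inv_inv)
    qed
    then show ?thesis using that by blast
  qed
  have inter: "A1 \<inter> A2 \<subseteq> {a\<in>A1. act' g a = a}"
  proof
    fix a assume a: "a \<in> A1 \<inter> A2"
    have e2a: "\<phi> e2 a = Some a" using a by (simp add: A2_def)
    have "\<phi> (E g) a = \<phi> t0 a" using law[OF e2S t0S, of a] m2t e2a by simp
    moreover have "\<phi> e1 a = \<phi> t0 a" using law[OF e1S t0S, of a] m1t A1e[of a] a by simp
    ultimately have "\<phi> (E g) a = Some a" using A1e[of a] a by simp
    then have ga: "act g a = a" using actE[of a g] a g by simp
    have "act (g \<otimes> inv g) a = act (inv g) (act g a)" using act_mult[of a g "inv g"] a g by simp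
    then have "act (inv g) a = a" using ga act_one[of a] a g by simp
    then show "a \<in> {a\<in>A1. act' g a = a}" using a by (simp add: act'_def)
  qed
  define \<alpha> where "\<alpha> a = the (\<phi> e2 a)" for a
  have \<alpha>: "\<phi> e2 a = Some (\<alpha> a) \<and> \<phi> e1 (\<alpha> a) = Some a \<and> \<alpha> a \<in> A2" if a: "a \<in> A1" for a
  proof -
    have "\<phi> e1 a = Option.bind (\<phi> e2 a) (\<phi> e1)" using law[OF e2S e1S, of a] m21 by simp
    then obtain b where b: "\<phi> e2 a = Some b" "\<phi> e1 b = Some a" using A1e[OF a]
      by (cases "\<phi> e2 a") auto
    have bm: "b < m" using rg[OF e2S _ b(1)] a by (simp add: A1_def)
    have "\<phi> e2 a = Option.bind (\<phi> e2 a) (\<phi> e2)" using law[OF e2S e2S, of a] m22 by simp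
    then have "\<phi> e2 b = Some b" using b by simp
    then show ?thesis using b bm by (simp add: \<alpha>_def A2_def)
  qed
  have "inj_on \<alpha> A1"
  proof (rule inj_onI)
    fix a a' assume "a \<in> A1" "a' \<in> A1" "\<alpha> a = \<alpha> a'"
    then show "a = a'" using \<alpha> by (metis option.inject)
  qed
  moreover have "\<alpha> ` A1 \<subseteq> A2" using \<alpha> by auto
  ultimately have c12: "card A1 \<le> card A2" by (rule card_inj_on_le) (simp add: A2_def)
  have finA2: "finite A2" by (simp add: A2_def)
  have "A1 \<union> A2 \<subseteq> {..<m}" by (auto simp: A1_def A2_def)
  then have cu: "card (A1 \<union> A2) \<le> m" using card_mono[OF finite_lessThan] by fastforce
  have ui: "card (A1 \<union> A2) + card (A1 \<inter> A2) = card A1 + card A2"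
    using card_Un_Int[OF finA1 finA2] by simp
  have ci: "card (A1 \<inter> A2) \<le> card {a\<in>A1. act' g a = a}"
    by (rule card_mono[OF _ inter]) (simp add: finA1)
  have "2 * card A1 - card {a\<in>A1. act' g a = a} \<le> m" using c12 cu ui ci by linarith
  then have "2 * card A1 - card (Fix_perm (card A1) (\<rho> g)) \<le> m" using fx by simp
  then show ?thesis using \<rho> by blast
qed


theorem corollary2p17:
  fixes G :: "('g, 'b) monoid_scheme" and g :: 'g
  assumes "group G" and "finite (carrier G)" and "carrier G \<noteq> {\<one>\<^bsub>G\<^esub>}"
    and "g \<in> carrier G" and "g \<noteq> \<one>\<^bsub>G\<^esub>"
  defines "S \<equiv> rees_carrier G" and "mul \<equiv> rees_mult G (sandwich_C G g)"
  shows "min_partial_degree S mul =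
           (LEAST k. \<exists>n \<rho>. faithful_perm_rep G n \<rho> \<and> k = 2 * n - card (Fix_perm n (\<rho> g))) \<and>
         min_total_degree S mul =
           (LEAST k. \<exists>n \<rho>. faithful_perm_rep G n \<rho> \<and> k = 2 * n - card (Fix_perm n (\<rho> g))) \<and>
         (LEAST k. \<exists>n \<rho>. faithful_perm_rep G n \<rho> \<and> k = 2 * n - card (Fix_perm n (\<rho> g))) =
         (LEAST k. \<exists>n \<rho>. faithful_perm_rep G n \<rho> \<and> no_iso_orbits G n \<rho> \<and>
                          k = 2 * n - card (Fix_perm n (\<rho> g)))"
proof -
  note G = assms(1) and fin = assms(2) and g = assms(4,5)
  interpret group G by (rule G)
  define Q where "Q k \<longleftrightarrow> (\<exists>n \<rho>. faithful_perm_rep G n \<rho> \<and> k = 2 * n - card (Fix_perm n (\<rho> g)))" for k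
  define Q' where "Q' k \<longleftrightarrow> (\<exists>n \<rho>. faithful_perm_rep G n \<rho> \<and> no_iso_orbits G n \<rho> \<and>
                          k = 2 * n - card (Fix_perm n (\<rho> g)))" for k
  define K where "K = (LEAST k. Q k)"
  define K' where "K' = (LEAST k. Q' k)"
  have "\<exists>\<rho>. faithful_perm_rep G (card (carrier G)) \<rho> \<and>
     card (Fix_perm (card (carrier G)) (\<rho> g)) = card {a\<in>carrier G. g \<otimes>\<^bsub>G\<^esub> a = a}"
    by (rule transport[OF G fin, where act="\<lambda>h a. h \<otimes>\<^bsub>G\<^esub> a"])
       (auto simp: m_assoc g dest: bspec[where x="\<one>\<^bsub>G\<^esub>"])
  then have "\<exists>k. Q k" unfolding Q_def by blast
  then have QK: "Q K" unfolding K_def by (rule LeastI_ex)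
  then obtain n \<rho> where \<rho>: "faithful_perm_rep G n \<rho>" and Kv: "K = 2 * n - card (Fix_perm n (\<rho> g))"
    unfolding Q_def by blast
  have tK: "total_faithful_action S mul K"
    unfolding S_def mul_def Kv by (rule rep_to_total[OF G g \<rho>])
  define T where "T = min_total_degree S mul"
  have TK: "T \<le> K" unfolding T_def min_total_degree_def by (rule Least_le[where P="\<lambda>m. total_faithful_action S mul m", OF tK])
  have tT: "total_faithful_action S mul T" unfolding T_def min_total_degree_def by (rule LeastI[where P="\<lambda>m. total_faithful_action S mul m", OF tK])
  have pT: "partial_faithful_action S mul T" by (rule total_to_partial[OF tT])
  define Pm where "Pm = min_partial_degree S mul"
  have PT: "Pm \<le> T" unfolding Pm_def min_partial_degree_def by (rule Least_le[where P="\<lambda>m. partial_faithful_action S mul m", OF pT])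
  have pP: "partial_faithful_action S mul Pm" unfolding Pm_def min_partial_degree_def by (rule LeastI[where P="\<lambda>m. partial_faithful_action S mul m", OF pT])
  obtain n2 \<rho>2 where \<rho>2: "faithful_perm_rep G n2 \<rho>2" "2 * n2 - card (Fix_perm n2 (\<rho>2 g)) \<le> Pm"
    using partial_lower[OF G g(1) pP[unfolded S_def mul_def]] by blast
  have "K \<le> 2 * n2 - card (Fix_perm n2 (\<rho>2 g))"
    unfolding K_def by (rule Least_le) (use \<rho>2 Q_def in blast)
  then have eq1: "Pm = K" "T = K" using \<rho>2(2) TK PT by linarith+
  obtain n3 \<rho>3 where \<rho>3: "faithful_perm_rep G n3 \<rho>3" "no_iso_orbits G n3 \<rho>3"
    "2 * n3 - card (Fix_perm n3 (\<rho>3 g)) \<le> 2 * card {..<n} - card {a\<in>{..<n}. \<rho> g a = a}"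
    using reduce_no_iso[OF G g(1), of "{..<n}" \<rho>] rep_mem[OF \<rho>] rep_mult[OF \<rho>] rep_one[OF G \<rho>]
      rep_inj[OF \<rho>] by auto
  have "{a\<in>{..<n}. \<rho> g a = a} = Fix_perm n (\<rho> g)" by (auto simp: Fix_perm_def)
  then have v3: "2 * n3 - card (Fix_perm n3 (\<rho>3 g)) \<le> K" using \<rho>3(3) Kv by simp
  have Q'3: "Q' (2 * n3 - card (Fix_perm n3 (\<rho>3 g)))" using \<rho>3 Q'_def by blast
  have "K' \<le> 2 * n3 - card (Fix_perm n3 (\<rho>3 g))" unfolding K'_def by (rule Least_le[where P=Q', OF Q'3])
  moreover have "Q' K'" unfolding K'_def by (rule LeastI[where P=Q', OF Q'3])
  then have "Q K'" unfolding Q_def Q'_def by blast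
  then have "K \<le> K'" unfolding K_def by (rule Least_le)
  ultimately have "K = K'" using v3 by linarith
  then show ?thesis using eq1 unfolding Pm_def T_def K_def K'_def Q_def Q'_def by simp
qed

end
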